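(* Let $k\ge 1$ and let $0\le b_0<b_1<\dots<b_k$ and $r_0>r_1>\dots>r_k=0$ be reals, let $s_i=\frac{b_i-b_{i-1}}{r_{i-1}-r_i}$ for $1\le i\le k$, and assume $s_1<\dots<s_k$. Let $p^i_1(t)=\min\{1,(e^{t/s_i}-1)/(e-1)\}$ for $1\le i\le k$, and define the profile $\hat p=(\hat p_0,\dots,\hat p_k)$ by $\hat p_0=1-p^1_1$, $\hat p_i=p^i_1-p^{i+1}_1$ for $1\le i\le k-1$, $\hat p_k=p^k_1$. Then for every $t\ge 0$, $$X_{\hat p}(t)\le \frac{e}{e-1}\,\textsc{opt}(t),$$ i.e. the expected cost of the online strategy with profile $\hat p$ is at most $\frac{e}{e-1}$ times the optimal offline cost, for every termination time $t$.
   Context: Additive multislope ski rental: states $0,\dots,k$, state $i$ has buying cost $b_i$ and rental rate $r_i$; holding state $i$ for duration $t$ costs $b_i+r_i t$, and moving from state $i$ to state $j>i$ costs $b_j-b_i$. The optimal offline cost for a game of length $t$ is $\textsc{opt}(t)=\min_i(b_i+r_it)$. For a profile $p=(p_0(t),\dots,p_k(t))$ (nonnegative functions summing to $1$ for every $t$, $p_i(t)$ being the probability of being in state $i$ at time $t$), the expected buying cost is $B_p(t)=\sum_i p_i(t)b_i$, the expected rental rate is $R_p(t)=\sum_ip_i(t)r_i$, and the expected total cost up to time $t$ is $X_p(t)=B_p(t)+\int_0^tR_p(z)\,dz$. *)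

theory Defs
  imports "HOL-Analysis.Analysis"
begin

text \<open>Additive multislope ski rental with states 0..k, buying costs b i, rental rates r i.
  A profile is a function p :: nat => real => real, p i t = probability of being in state i at time t.\<close>

definition opt_cost :: "nat \<Rightarrow> (nat \<Rightarrow> real) \<Rightarrow> (nat \<Rightarrow> real) \<Rightarrow> real \<Rightarrow> real" where
  "opt_cost k b r t = (MIN i\<in>{0..k}. b i + r i * t)"

definition exp_buy :: "nat \<Rightarrow> (nat \<Rightarrow> real) \<Rightarrow> (nat \<Rightarrow> real \<Rightarrow> real) \<Rightarrow> real \<Rightarrow> real" where
  "exp_buy k b p t = (\<Sum>i\<in>{0..k}. p i t * b i)"

definition exp_rate :: "nat \<Rightarrow> (nat \<Rightarrow> real) \<Rightarrow> (nat \<Rightarrow> real \<Rightarrow> real) \<Rightarrow> real \<Rightarrow> real" where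
  "exp_rate k r p t = (\<Sum>i\<in>{0..k}. p i t * r i)"

definition exp_total :: "nat \<Rightarrow> (nat \<Rightarrow> real) \<Rightarrow> (nat \<Rightarrow> real) \<Rightarrow> (nat \<Rightarrow> real \<Rightarrow> real) \<Rightarrow> real \<Rightarrow> real" where
  "exp_total k b r p t = exp_buy k b p t + integral {0..t} (\<lambda>z. exp_rate k r p z)"

definition slope :: "(nat \<Rightarrow> real) \<Rightarrow> (nat \<Rightarrow> real) \<Rightarrow> nat \<Rightarrow> real" where
  "slope b r i = (b i - b (i - 1)) / (r (i - 1) - r i)"

definition p1 :: "(nat \<Rightarrow> real) \<Rightarrow> (nat \<Rightarrow> real) \<Rightarrow> nat \<Rightarrow> real \<Rightarrow> real" where
  "p1 b r i t = min 1 ((exp (t / slope b r i) - 1) / (exp 1 - 1))"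

definition hat_profile :: "nat \<Rightarrow> (nat \<Rightarrow> real) \<Rightarrow> (nat \<Rightarrow> real) \<Rightarrow> nat \<Rightarrow> real \<Rightarrow> real" where
  "hat_profile k b r i t =
     (if i = 0 then 1 - p1 b r 1 t
      else if i < k then p1 b r i t - p1 b r (i + 1) t
      else if i = k then p1 b r k t
      else 0)"

end

theory Submission imports Defs begin

lemma qint_le:
  fixes s u :: real assumes s: "s > 0" and u: "0 \<le> u" "u \<le> s"
  shows "((\<lambda>x. min 1 ((exp (x/s) - 1)/(exp 1 - 1))) has_integral
           (s*(exp(u/s)-1) - u)/(exp 1 - 1)) {0..u}"
proof -
  have e: "exp 1 - 1 > (0::real)" by simp
  have deriv: "((\<lambda>x. (s*(exp(x/s)-1) - x)/(exp 1 - 1)) has_real_derivative (exp(x/s)-1)/(exp 1 - 1)) (at x)" for x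
  proof -
    have "((\<lambda>x. s*(exp(x/s)-1) - x) has_real_derivative exp(x/s) - 1) (at x)"
    proof -
      have "((\<lambda>x::real. s*(exp(x/s)-1) - x) has_real_derivative s*(exp(x/s)*(1/s) - 0) - 1) (at x)"
        by (intro DERIV_diff DERIV_cmult DERIV_fun_exp DERIV_cdivide DERIV_ident DERIV_const)
      moreover have "s*(exp(x/s)*(1/s) - 0) - 1 = exp(x/s) - 1" using s by simp
      ultimately show ?thesis by simp
    qed
    from DERIV_cdivide[OF this, of "exp 1 - 1"] show ?thesis by simp
  qed
  have "((\<lambda>x. (exp(x/s)-1)/(exp 1 - 1)) has_integral
          (s*(exp(u/s)-1) - u)/(exp 1 - 1) - (s*(exp(0/s)-1) - 0)/(exp 1 - 1)) {0..u}"
    apply (rule fundamental_theorem_of_calculus)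
    using u apply simp
    apply (subst has_real_derivative_iff_has_vector_derivative[symmetric])
    apply (rule has_field_derivative_at_within[OF deriv])
    done
  hence "((\<lambda>x. (exp(x/s)-1)/(exp 1 - 1)) has_integral (s*(exp(u/s)-1) - u)/(exp 1 - 1)) {0..u}"
    by simp
  moreover have "min 1 ((exp (x/s) - 1)/(exp 1 - 1)) = (exp(x/s)-1)/(exp 1 - 1)" if "x \<in> {0..u}" for x
  proof -
    have "x/s \<le> 1" using that u s by (simp add: divide_le_eq)
    hence "exp (x/s) \<le> exp 1" by simp
    thus ?thesis using e by (simp add: divide_le_eq)
  qed
  ultimately show ?thesis using has_integral_cong by (metis (no_types, lifting))
qed

lemma qint:
  fixes s t :: real assumes s: "s > 0" and t: "t \<ge> 0"
  shows "((\<lambda>x. min 1 ((exp (x/s) - 1)/(exp 1 - 1))) has_integral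
     (if t \<le> s then (s*(exp(t/s)-1) - t)/(exp 1 - 1) else s*(exp 1 - 2)/(exp 1 - 1) + (t - s))) {0..t}"
proof (cases "t \<le> s")
  case True thus ?thesis using qint_le[OF s t True] by simp
next
  case False
  have e: "exp 1 - 1 > (0::real)" by simp
  have A: "((\<lambda>x. min 1 ((exp (x/s) - 1)/(exp 1 - 1))) has_integral s*(exp 1 - 2)/(exp 1 - 1)) {0..s}"
    using qint_le[OF s, of s] s by (simp add: field_simps)
  have "((\<lambda>x. 1::real) has_integral (t - s)) {s..t}"
    using has_integral_const_real[of "1::real" s t] False by simp
  moreover have "min 1 ((exp (x/s) - 1)/(exp 1 - 1)) = 1" if "x \<in> {s..t}" for x
  proof -
    have "1 \<le> x/s" using that s by (simp add: le_divide_eq)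
    hence "exp 1 \<le> exp (x/s)" by simp
    thus ?thesis using e by (simp add: le_divide_eq)
  qed
  ultimately have B: "((\<lambda>x. min 1 ((exp (x/s) - 1)/(exp 1 - 1))) has_integral (t - s)) {s..t}"
    using has_integral_cong by (metis (no_types, lifting))
  show ?thesis using has_integral_combine[OF _ _ A B] s False by simp
qed

lemma qval:
  fixes s t :: real assumes s: "s > 0" and t: "t \<ge> 0"
  shows "s * min 1 ((exp (t/s) - 1)/(exp 1 - 1)) + t -
     (if t \<le> s then (s*(exp(t/s)-1) - t)/(exp 1 - 1) else s*(exp 1 - 2)/(exp 1 - 1) + (t - s))
     = exp 1 / (exp 1 - 1) * min s t"
proof -
  have e: "exp 1 - 1 > (0::real)" by simp
  define E :: real where "E = exp 1"
  define F :: real where "F = exp (t/s)"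
  have e': "E - 1 \<noteq> 0" using e unfolding E_def by linarith
  show ?thesis
  proof (cases "t \<le> s")
    case True
    have "t/s \<le> 1" using True s by (simp add: divide_le_eq)
    hence "exp (t/s) \<le> exp 1" by simp
    hence eq: "min 1 ((exp (t/s) - 1)/(exp 1 - 1)) = (exp (t/s) - 1)/(exp 1 - 1)" using e by (simp add: divide_le_eq)
    have "s * ((F - 1)/D) + t - (s*(F-1) - t)/D = (D+1) / D * t" if "D \<noteq> 0" for D
      using that by (simp add: field_simps)
    hence "s * ((F - 1)/(E - 1)) + t - (s*(F-1) - t)/(E - 1) = ((E-1)+1) / (E - 1) * t"
      using e' by blast
    thus ?thesis using True unfolding eq E_def F_def by simp
  next
    case False
    have "1 \<le> t/s" using False s by (simp add: le_divide_eq)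
    hence "exp 1 \<le> exp (t/s)" by simp
    hence eq: "min 1 ((exp (t/s) - 1)/(exp 1 - 1)) = 1" using e by (simp add: le_divide_eq)
    have "s * 1 + t - (s*((D+1) - 2)/D + (t - s)) = (D+1) / D * s" if "D \<noteq> 0" for D
      using that by (simp add: field_simps)
    hence "s * 1 + t - (s*(((E-1)+1) - 2)/(E-1) + (t - s)) = ((E-1)+1) / (E - 1) * s"
      using e' by blast
    thus ?thesis using False unfolding eq E_def F_def by simp
  qed
qed

lemma abel:
  fixes Q x :: "nat \<Rightarrow> real"
  shows "(\<Sum>i=0..k. (Q i - Q (Suc i)) * x i) = Q 0 * x 0 + (\<Sum>i=1..k. Q i * (x i - x (i-1))) - Q (Suc k) * x k"
proof (induction k)
  case 0 thus ?case by (simp add: algebra_simps)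
next
  case (Suc k)
  thus ?case by (simp add: algebra_simps)
qed


theorem theorem3p4:
  fixes k :: nat and b r :: "nat \<Rightarrow> real" and t :: real
  assumes "k \<ge> 1"
    and "0 \<le> b 0"
    and "\<And>i. i < k \<Longrightarrow> b i < b (i + 1)"
    and "\<And>i. i < k \<Longrightarrow> r i > r (i + 1)"
    and "r k = 0"
    and "\<And>i. 1 \<le> i \<Longrightarrow> i < k \<Longrightarrow> slope b r i < slope b r (i + 1)"
    and "t \<ge> 0"
  shows "exp_total k b r (hat_profile k b r) t \<le> exp 1 / (exp 1 - 1) * opt_cost k b r t"
proof -
  note k = assms(1) and b0 = assms(2) and t = assms(7)
  define c :: real where "c = exp 1 / (exp 1 - 1)"
  define Iq where "Iq s t = (if t \<le> s then (s*(exp(t/s)-1) - t)/(exp 1 - 1) else s*(exp 1 - 2)/(exp 1 - 1) + (t - s))" for s t :: real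
  have dr: "r (i-1) - r i > 0" if "i \<in> {1..k}" for i
    using assms(4)[of "i-1"] that by auto
  have db: "b i - b (i-1) > 0" if "i \<in> {1..k}" for i
    using assms(3)[of "i-1"] that by auto
  have sp: "slope b r i > 0" if "i \<in> {1..k}" for i
    using dr[OF that] db[OF that] unfolding slope_def by simp
  have sb: "(r (i-1) - r i) * slope b r i = b i - b (i-1)" if "i \<in> {1..k}" for i
    using dr[OF that] unfolding slope_def by simp
  define Q where "Q z i = (if i = 0 then 1 else if i \<le> k then p1 b r i z else 0)" for z i
  have hQ: "hat_profile k b r i z = Q z i - Q z (Suc i)" if "i \<in> {0..k}" for i z
    using that k unfolding hat_profile_def Q_def by auto
  have buy: "exp_buy k b (hat_profile k b r) z = b 0 + (\<Sum>i=1..k. p1 b r i z * (b i - b (i-1)))" for z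
  proof -
    have "exp_buy k b (hat_profile k b r) z = (\<Sum>i=0..k. (Q z i - Q z (Suc i)) * b i)"
      unfolding exp_buy_def by (rule sum.cong) (auto simp: hQ)
    also have "\<dots> = Q z 0 * b 0 + (\<Sum>i=1..k. Q z i * (b i - b (i-1))) - Q z (Suc k) * b k"
      by (rule abel)
    also have "\<dots> = b 0 + (\<Sum>i=1..k. p1 b r i z * (b i - b (i-1)))"
      by (auto simp: Q_def intro!: sum.cong)
    finally show ?thesis .
  qed
  have rate: "exp_rate k r (hat_profile k b r) z = r 0 + (\<Sum>i=1..k. (r i - r (i-1)) * p1 b r i z)" for z
  proof -
    have "exp_rate k r (hat_profile k b r) z = (\<Sum>i=0..k. (Q z i - Q z (Suc i)) * r i)"
      unfolding exp_rate_def by (rule sum.cong) (auto simp: hQ)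
    also have "\<dots> = Q z 0 * r 0 + (\<Sum>i=1..k. Q z i * (r i - r (i-1))) - Q z (Suc k) * r k"
      by (rule abel)
    also have "\<dots> = r 0 + (\<Sum>i=1..k. (r i - r (i-1)) * p1 b r i z)"
      by (auto simp: Q_def intro!: sum.cong)
    finally show ?thesis .
  qed
  have int: "((\<lambda>z. exp_rate k r (hat_profile k b r) z) has_integral
      (r 0 * t + (\<Sum>i=1..k. (r i - r (i-1)) * Iq (slope b r i) t))) {0..t}"
  proof -
    have "((\<lambda>z. r 0) has_integral r 0 * t) {0..t}"
      using has_integral_const_real[of "r 0" 0 t] t by (simp add: mult.commute)
    moreover have "((\<lambda>z. \<Sum>i=1..k. (r i - r (i-1)) * p1 b r i z) has_integral
         (\<Sum>i=1..k. (r i - r (i-1)) * Iq (slope b r i) t)) {0..t}"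
      apply (rule has_integral_sum, simp)
      apply (rule has_integral_mult_right)
      unfolding p1_def Iq_def using qint sp t by blast
    ultimately show ?thesis unfolding rate by (rule has_integral_add)
  qed
  have X: "exp_total k b r (hat_profile k b r) t = b 0 + (\<Sum>i=1..k. (r (i-1) - r i) * (c * min (slope b r i) t))"
  proof -
    have r0: "r 0 = (\<Sum>i=1..k. r (i-1) - r i)"
      using sum_telescope''[of 0 k "\<lambda>i. - r i"] assms(5) by simp
    have "exp_total k b r (hat_profile k b r) t = b 0 + (\<Sum>i=1..k. p1 b r i t * (b i - b (i-1)))
       + (r 0 * t + (\<Sum>i=1..k. (r i - r (i-1)) * Iq (slope b r i) t))"
      unfolding exp_total_def buy integral_unique[OF int] by simp
    also have "\<dots> = b 0 + (\<Sum>i=1..k. (r (i-1) - r i) * (slope b r i * p1 b r i t + t - Iq (slope b r i) t))"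
    proof -
      have trm: "p1 b r i t * (b i - b (i-1)) + (r (i-1) - r i) * t + (r i - r (i-1)) * Iq (slope b r i) t
          = (r (i-1) - r i) * (slope b r i * p1 b r i t + t - Iq (slope b r i) t)" if "i \<in> {1..k}" for i
        unfolding sb[OF that, symmetric] by (simp add: algebra_simps)
      have "r 0 * t = (\<Sum>i=1..k. (r (i-1) - r i) * t)" unfolding r0 by (simp add: sum_distrib_right)
      hence "(\<Sum>i=1..k. p1 b r i t * (b i - b (i-1))) + (r 0 * t + (\<Sum>i=1..k. (r i - r (i-1)) * Iq (slope b r i) t))
          = (\<Sum>i=1..k. p1 b r i t * (b i - b (i-1)) + (r (i-1) - r i) * t + (r i - r (i-1)) * Iq (slope b r i) t)"
        by (simp add: sum.distrib)
      also have "\<dots> = (\<Sum>i=1..k. (r (i-1) - r i) * (slope b r i * p1 b r i t + t - Iq (slope b r i) t))"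
        by (rule sum.cong[OF refl trm])
      finally show ?thesis by simp
    qed
    also have "\<dots> = b 0 + (\<Sum>i=1..k. (r (i-1) - r i) * (c * min (slope b r i) t))"
      unfolding p1_def Iq_def c_def using qval sp t by (auto intro!: sum.cong)
    finally show ?thesis .
  qed
  obtain j where j: "j \<in> {0..k}" and oj: "opt_cost k b r t = b j + r j * t"
  proof -
    have "opt_cost k b r t \<in> (\<lambda>i. b i + r i * t) ` {0..k}"
      unfolding opt_cost_def by (rule Min_in) auto
    thus ?thesis using that by auto
  qed
  have S: "(\<Sum>i=1..k. (r (i-1) - r i) * min (slope b r i) t) \<le> b j - b 0 + r j * t"
  proof -
    have split: "{1..k} = {1..j} \<union> {Suc j..k}" using j by auto
    have "(\<Sum>i=1..k. (r (i-1) - r i) * min (slope b r i) t)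
        = (\<Sum>i=1..j. (r (i-1) - r i) * min (slope b r i) t) + (\<Sum>i=Suc j..k. (r (i-1) - r i) * min (slope b r i) t)"
      unfolding split by (rule sum.union_disjoint) auto
    also have "\<dots> \<le> (\<Sum>i=1..j. (r (i-1) - r i) * slope b r i) + (\<Sum>i=Suc j..k. (r (i-1) - r i) * t)"
      apply (rule add_mono; rule sum_mono)
      using dr j by (auto intro!: mult_left_mono)
    also have "(\<Sum>i=1..j. (r (i-1) - r i) * slope b r i) = (\<Sum>i=1..j. b i - b (i-1))"
      using j by (intro sum.cong refl sb) auto
    also have "\<dots> = b j - b 0" using sum_telescope''[of 0 j b] by simp
    also have "(\<Sum>i=Suc j..k. (r (i-1) - r i) * t) = (\<Sum>i=Suc j..k. r (i-1) - r i) * t"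
      by (simp add: sum_distrib_right)
    also have "(\<Sum>i=Suc j..k. r (i-1) - r i) = r j"
      using sum_telescope''[of j k "\<lambda>i. - r i"] assms(5) j by simp
    finally show ?thesis .
  qed
  have c1: "c \<ge> 1" unfolding c_def by simp
  have "exp_total k b r (hat_profile k b r) t = b 0 + c * (\<Sum>i=1..k. (r (i-1) - r i) * min (slope b r i) t)"
    unfolding X sum_distrib_left by (simp add: algebra_simps)
  also have "\<dots> \<le> c * b 0 + c * (b j - b 0 + r j * t)"
    using S c1 b0 by (intro add_mono mult_left_mono) (auto intro: mult_right_mono[of 1 c, simplified])
  also have "\<dots> = c * opt_cost k b r t" unfolding oj by (simp add: algebra_simps)
  finally show ?thesis unfolding c_def .
qed

end
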